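(* Consider the one-dimensional Euler equations for an ideal gas with $\gamma>1$, and the first order finite volume scheme on a moving mesh \[ h_j^{n+1}\,\bar U_j^{n+1} = h_j^n\,\bar U_j^n - \Delta t_n\,\big[\hat G_{j+1/2}^n - \hat G_{j-1/2}^n\big],\qquad h_j^{n+1} = h_j^n + \Delta t_n\,(w_{j+1/2}^n - w_{j-1/2}^n), \] where $\hat G_{j+1/2}^n = \hat G(\bar U_j^n,\bar U_{j+1}^n,w_{j+1/2}^n)$ is the ALE Rusanov flux with wave speed $\lambda_{j+1/2}^n=\lambda(\bar U_j^n,\bar U_{j+1}^n,w_{j+1/2}^n)$. Fix $\beta\in(0,1)$ and suppose the time step satisfies \[ \Delta t_n \le \min_j\left\{ \frac{(1-\tfrac12\beta)\,h_j^n}{\tfrac12(\lambda_{j-1/2}^n+\lambda_{j+1/2}^n)},\ \frac{\beta\, h_j^n}{|w_{j+1/2}^n - w_{j-1/2}^n|}\right\} \] (the second term is read as $+\infty$ when $w_{j+1/2}^n=w_{j-1/2}^n$). If $\rho_j^n>0$ and $p_j^n>0$ for all $j$, then $h_j^{n+1}>0$, $\rho_j^{n+1}>0$ and $p_j^{n+1}>0$ for all $j$. In other words, the scheme is positivity preserving.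
   Context: Euler equations: $U_t + f(U)_x=0$ with $U=(\rho,\rho v,E)^\top$ and $f(U)=(\rho v,\ p+\rho v^2,\ (E+p)v)^\top$. Here $E=p/(\gamma-1)+\rho v^2/2$ and the sound speed is $c=\sqrt{\gamma p/\rho}$. Mesh: cells $C_j$ have length $h_j^n>0$ at time $t_n$. Each cell face $x_{j+1/2}$ moves with a constant velocity $w_{j+1/2}^n$ on the interval $(t_n,t_{n+1})$. The index $j$ runs over all cells, each of which has two neighbours (for example an infinite or a periodic mesh). $\bar U_j^n$ denotes the cell value, with density $\rho_j^n$, velocity $v_j^n$, pressure $p_j^n$ and sound speed $c_j^n$. ALE flux: $G(U,w)=f(U)-wU$. ALE Rusanov flux: \[ \hat G(U_l,U_r,w)=\tfrac12[G(U_l,w)+G(U_r,w)]-\tfrac12\lambda(U_l,U_r,w)(U_r-U_l), \] with $\lambda(U_l,U_r,w)=\max\{|v_l-w|+c_l,\ |v_r-w|+c_r\}$. *)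

theory Defs
  imports "HOL-Analysis.Analysis"
begin

text \<open>Conserved state U = (rho, rho v, E) as a triple; vector operations on
  real \<times> real \<times> real come from Product_Vector.\<close>
type_synonym state = "real \<times> real \<times> real"

definition density :: "state \<Rightarrow> real" where
  "density U = fst U"

definition momentum :: "state \<Rightarrow> real" where
  "momentum U = fst (snd U)"

definition energy :: "state \<Rightarrow> real" where
  "energy U = snd (snd U)"

definition velocity :: "state \<Rightarrow> real" where
  "velocity U = momentum U / density U"

text \<open>From E = p/(gamma-1) + rho v^2/2.\<close>
definition pressure :: "real \<Rightarrow> state \<Rightarrow> real" where
  "pressure \<gamma> U = (\<gamma> - 1) * (energy U - density U * (velocity U)\<^sup>2 / 2)"

definition sound_speed :: "real \<Rightarrow> state \<Rightarrow> real" where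
  "sound_speed \<gamma> U = sqrt (\<gamma> * pressure \<gamma> U / density U)"

definition euler_flux :: "real \<Rightarrow> state \<Rightarrow> state" where
  "euler_flux \<gamma> U =
     (density U * velocity U,
      pressure \<gamma> U + density U * (velocity U)\<^sup>2,
      (energy U + pressure \<gamma> U) * velocity U)"

definition ale_flux :: "real \<Rightarrow> state \<Rightarrow> real \<Rightarrow> state" where
  "ale_flux \<gamma> U w = euler_flux \<gamma> U - w *\<^sub>R U"

definition rusanov_speed :: "real \<Rightarrow> state \<Rightarrow> state \<Rightarrow> real \<Rightarrow> real" where
  "rusanov_speed \<gamma> Ul Ur w =
     max (\<bar>velocity Ul - w\<bar> + sound_speed \<gamma> Ul) (\<bar>velocity Ur - w\<bar> + sound_speed \<gamma> Ur)"

definition rusanov_flux :: "real \<Rightarrow> state \<Rightarrow> state \<Rightarrow> real \<Rightarrow> state" where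
  "rusanov_flux \<gamma> Ul Ur w =
     (1/2) *\<^sub>R (ale_flux \<gamma> Ul w + ale_flux \<gamma> Ur w)
     - (1/2 * rusanov_speed \<gamma> Ul Ur w) *\<^sub>R (Ur - Ul)"

text \<open>Mesh indexed by integers (infinite mesh). w j is the velocity of face x_{j+1/2},
  so face x_{j-1/2} has velocity w (j-1). Numerical flux at face j+1/2:\<close>
definition face_flux :: "real \<Rightarrow> (int \<Rightarrow> state) \<Rightarrow> (int \<Rightarrow> real) \<Rightarrow> int \<Rightarrow> state" where
  "face_flux \<gamma> U w j = rusanov_flux \<gamma> (U j) (U (j + 1)) (w j)"

definition face_speed :: "real \<Rightarrow> (int \<Rightarrow> state) \<Rightarrow> (int \<Rightarrow> real) \<Rightarrow> int \<Rightarrow> real" where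
  "face_speed \<gamma> U w j = rusanov_speed \<gamma> (U j) (U (j + 1)) (w j)"

definition new_length :: "(int \<Rightarrow> real) \<Rightarrow> (int \<Rightarrow> real) \<Rightarrow> real \<Rightarrow> int \<Rightarrow> real" where
  "new_length h w dt j = h j + dt * (w j - w (j - 1))"

definition new_state ::
  "real \<Rightarrow> (int \<Rightarrow> real) \<Rightarrow> (int \<Rightarrow> state) \<Rightarrow> (int \<Rightarrow> real) \<Rightarrow> real \<Rightarrow> int \<Rightarrow> state" where
  "new_state \<gamma> h U w dt j =
     (1 / new_length h w dt j) *\<^sub>R
       (h j *\<^sub>R U j - dt *\<^sub>R (face_flux \<gamma> U w j - face_flux \<gamma> U w (j - 1)))"

end

theory Submission
  imports Defs
begin
definition adm :: "state \<Rightarrow> bool" where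
  "adm U \<longleftrightarrow> density U > 0 \<and> 2 * density U * energy U - (momentum U)\<^sup>2 > 0"

lemma comp_simps[simp]:
  "density (X + Y) = density X + density Y" "momentum (X + Y) = momentum X + momentum Y"
  "energy (X + Y) = energy X + energy Y"
  "density (X - Y) = density X - density Y" "momentum (X - Y) = momentum X - momentum Y"
  "energy (X - Y) = energy X - energy Y"
  "density (a *\<^sub>R X) = a * density X" "momentum (a *\<^sub>R X) = a * momentum X"
  "energy (a *\<^sub>R X) = a * energy X"
  by (simp_all add: density_def momentum_def energy_def)

lemma pressure_alt: "density U \<noteq> 0 \<Longrightarrow>
  pressure g U = (g - 1) * (2 * density U * energy U - (momentum U)\<^sup>2) / (2 * density U)"
  by (simp add: pressure_def velocity_def power2_eq_square field_simps)

lemma adm_iff: assumes "g > 1" shows "(density U > 0 \<and> pressure g U > 0) \<longleftrightarrow> adm U"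
proof (cases "density U > 0")
  case True
  then show ?thesis using assms by (simp add: adm_def pressure_alt divide_pos_pos zero_less_mult_iff zero_less_divide_iff)
qed (simp add: adm_def)

lemma adm_scale: assumes "a > 0" "adm X" shows "adm (a *\<^sub>R X)"
proof -
  have "(a * momentum X)\<^sup>2 < 2 * (a * density X) * (a * energy X)"
  proof -
    have "a\<^sup>2 * (momentum X)\<^sup>2 < a\<^sup>2 * (2 * density X * energy X)"
      using assms by (intro mult_strict_left_mono) (auto simp: adm_def)
    then show ?thesis by (simp add: power_mult_distrib algebra_simps power2_eq_square)
  qed
  then show ?thesis using assms by (simp add: adm_def)
qed

lemma cs: fixes r1 r2 m1 m2 :: real assumes "r1 > 0" "r2 > 0"
  shows "(m1 + m2)^2 \<le> (r1 + r2) * (m1^2 / r1 + m2^2 / r2)"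
proof -
  have "(r1 + r2) * (m1^2 / r1 + m2^2 / r2) - (m1 + m2)^2 = (r2 * m1 - r1 * m2)^2 / (r1 * r2)"
    using assms by (simp add: field_simps power2_eq_square)
  moreover have "(r2 * m1 - r1 * m2)^2 / (r1 * r2) \<ge> 0" using assms by simp
  ultimately show ?thesis by linarith
qed

lemma adm_add: assumes "adm X" "adm Y" shows "adm (X + Y)"
proof -
  let ?r1 = "density X" and ?r2 = "density Y" and ?m1 = "momentum X" and ?m2 = "momentum Y"
  have r: "?r1 > 0" "?r2 > 0" using assms by (auto simp: adm_def)
  have e1: "?m1^2 / ?r1 < 2 * energy X" using assms r by (simp add: adm_def pos_divide_less_eq mult.commute mult.left_commute)
  have e2: "?m2^2 / ?r2 < 2 * energy Y" using assms r by (simp add: adm_def pos_divide_less_eq mult.commute mult.left_commute)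
  have "(?m1 + ?m2)^2 \<le> (?r1 + ?r2) * (?m1^2 / ?r1 + ?m2^2 / ?r2)" using cs r by blast
  also have "\<dots> < (?r1 + ?r2) * (2 * energy X + 2 * energy Y)"
    using r e1 e2 by (intro mult_strict_left_mono) auto
  finally show ?thesis using r by (simp add: adm_def algebra_simps)
qed

lemma key_alg: fixes r v p g a s E :: real
  assumes r: "r > 0" and p: "p > 0" and g: "g > 1" and s: "s\<^sup>2 = 1"
    and a: "a\<^sup>2 * r \<ge> g * p" and E: "E = p / (g - 1) + r * v\<^sup>2 / 2"
  shows "2 * (r * a) * (a * E - s * p * v) - (r * v * a - s * p)\<^sup>2 > 0"
proof -
  have "2 * (r * a) * (a * E - s * p * v) - (r * v * a - s * p)\<^sup>2
        = 2 * (a\<^sup>2 * r) * p / (g - 1) - s\<^sup>2 * p\<^sup>2"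
    using g unfolding E by (simp add: field_simps power2_eq_square)
  also have "\<dots> = 2 * (a\<^sup>2 * r) * p / (g - 1) - p\<^sup>2" using s by simp
  also have "2 * (a\<^sup>2 * r) * p / (g - 1) \<ge> 2 * (g * p) * p / (g - 1)"
    using a g p by (intro divide_right_mono mult_right_mono mult_left_mono) auto
  moreover have "2 * (g * p) * p / (g - 1) > p\<^sup>2"
    using g p by (simp add: field_simps power2_eq_square add_pos_pos)
  ultimately show ?thesis by linarith
qed

lemma ale_simps[simp]:
  "density (ale_flux g U w) = density U * velocity U - w * density U"
  "momentum (ale_flux g U w) = pressure g U + density U * (velocity U)\<^sup>2 - w * momentum U"
  "energy (ale_flux g U w) = (energy U + pressure g U) * velocity U - w * energy U"
  by (simp_all add: ale_flux_def euler_flux_def density_def momentum_def energy_def)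

lemma key: assumes g: "g > 1" and r: "density U > 0" and p: "pressure g U > 0"
  and s: "s = 1 \<or> s = -1" and l: "l \<ge> \<bar>velocity U - w\<bar> + sound_speed g U"
  shows "adm (l *\<^sub>R U - s *\<^sub>R ale_flux g U w)"
proof -
  define \<rho> v P E where "\<rho> = density U" "v = velocity U" "P = pressure g U" "E = energy U"
  define a where "a = l - s * (v - w)"
  have m: "momentum U = \<rho> * v" using r by (simp add: \<rho>_v_P_E_def velocity_def)
  have E: "E = P / (g - 1) + \<rho> * v\<^sup>2 / 2" using g
    by (simp add: \<rho>_v_P_E_def pressure_def field_simps)
  have c: "sound_speed g U > 0" using g r p by (simp add: sound_speed_def)
  have "s * (v - w) \<le> \<bar>v - w\<bar>" using s by auto
  hence ac: "a \<ge> sound_speed g U" using l by (simp add: a_def \<rho>_v_P_E_def)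
  hence apos: "a > 0" using c by linarith
  have "a\<^sup>2 \<ge> (sound_speed g U)\<^sup>2" using ac c by (simp add: power_mono)
  also have "(sound_speed g U)\<^sup>2 = g * P / \<rho>" using g r p
    by (simp add: sound_speed_def \<rho>_v_P_E_def)
  finally have a2: "a\<^sup>2 * \<rho> \<ge> g * P" using r by (simp add: \<rho>_v_P_E_def pos_divide_le_eq)
  have s2: "s\<^sup>2 = 1" using s by auto
  have dV: "density (l *\<^sub>R U - s *\<^sub>R ale_flux g U w) = \<rho> * a"
    using r m by (simp add: \<rho>_v_P_E_def a_def algebra_simps)
  have mV: "momentum (l *\<^sub>R U - s *\<^sub>R ale_flux g U w) = \<rho> * v * a - s * P"
    using m by (simp add: \<rho>_v_P_E_def a_def power2_eq_square algebra_simps)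
  have eV: "energy (l *\<^sub>R U - s *\<^sub>R ale_flux g U w) = a * E - s * P * v"
    by (simp add: \<rho>_v_P_E_def a_def algebra_simps)
  show ?thesis unfolding adm_def dV mV eV
    using key_alg[OF _ _ g s2 a2 E] r p apos by (simp add: \<rho>_v_P_E_def)
qed

lemma ident: fixes U U0 U1 F G0 G1 Gm0 Gm1 :: "state"
  assumes "Gm1 = F - w1 *\<^sub>R U" "Gm0 = F - w0 *\<^sub>R U"
  shows "h *\<^sub>R U - dt *\<^sub>R (((1/2) *\<^sub>R (Gm1 + G1) - (1/2*l1) *\<^sub>R (U1 - U))
            - ((1/2) *\<^sub>R (G0 + Gm0) - (1/2*l0) *\<^sub>R (U - U0)))
   = (h - dt/2*(l0+l1) + dt/2*(w1-w0)) *\<^sub>R U + (dt/2) *\<^sub>R (l1 *\<^sub>R U1 - 1 *\<^sub>R G1)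
     + (dt/2) *\<^sub>R (l0 *\<^sub>R U0 - (-1) *\<^sub>R G0)"
  unfolding assms by (simp add: prod_eq_iff field_simps)

lemma adm_comb: "adm X \<Longrightarrow> a \<ge> 0 \<Longrightarrow> adm Y \<Longrightarrow> adm (a *\<^sub>R X + Y)"
proof (cases "a = 0")
  case False
  assume "adm X" "a \<ge> 0" "adm Y"
  with False have "adm (a *\<^sub>R X)" by (intro adm_scale) auto
  then show ?thesis using \<open>adm Y\<close> by (rule adm_add)
qed simp

lemma speed_ge: "rusanov_speed g Ul Ur w \<ge> \<bar>velocity Ul - w\<bar> + sound_speed g Ul"
  "rusanov_speed g Ul Ur w \<ge> \<bar>velocity Ur - w\<bar> + sound_speed g Ur"
  by (simp_all add: rusanov_speed_def)

lemma ss_pos: "g > 1 \<Longrightarrow> density U > 0 \<Longrightarrow> pressure g U > 0 \<Longrightarrow> sound_speed g U > 0"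
  by (simp add: sound_speed_def)

theorem theorem1:
  fixes \<gamma> \<beta> dt :: real
    and h w :: "int \<Rightarrow> real"
    and U :: "int \<Rightarrow> state"
  assumes gamma: "\<gamma> > 1"
    and beta: "0 < \<beta>" "\<beta> < 1"
    and dt_pos: "dt > 0"
    and h_pos: "\<forall>j. h j > 0"
    and rho_pos: "\<forall>j. density (U j) > 0"
    and p_pos: "\<forall>j. pressure \<gamma> (U j) > 0"
    and cfl1: "\<forall>j. dt \<le> (1 - \<beta> / 2) * h j
                     / ((face_speed \<gamma> U w (j - 1) + face_speed \<gamma> U w j) / 2)"
    and cfl2: "\<forall>j. w j \<noteq> w (j - 1) \<longrightarrow> dt \<le> \<beta> * h j / \<bar>w j - w (j - 1)\<bar>"
  shows "\<forall>j. new_length h w dt j > 0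
           \<and> density (new_state \<gamma> h U w dt j) > 0
           \<and> pressure \<gamma> (new_state \<gamma> h U w dt j) > 0"
proof
  fix j
  define l0 where "l0 = face_speed \<gamma> U w (j - 1)"
  define l1 where "l1 = face_speed \<gamma> U w j"
  define a where "a = h j - dt/2*(l0+l1) + dt/2*(w j - w (j-1))"
  define H where "H = new_length h w dt j"
  have hj: "h j > 0" using h_pos by simp
  have l0ge: "l0 \<ge> \<bar>velocity (U (j-1)) - w (j-1)\<bar> + sound_speed \<gamma> (U (j-1))"
    using speed_ge(1) by (simp add: l0_def face_speed_def)
  have l1ge: "l1 \<ge> \<bar>velocity (U (j+1)) - w j\<bar> + sound_speed \<gamma> (U (j+1))"
    using speed_ge(2) by (simp add: l1_def face_speed_def)
  have l0p: "l0 > 0" using l0ge ss_pos[OF gamma] rho_pos p_pos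
    by (smt (verit, best) abs_ge_zero)
  have l1p: "l1 > 0" using l1ge ss_pos[OF gamma] rho_pos p_pos
    by (smt (verit, best) abs_ge_zero)
  have c1: "dt * ((l0 + l1) / 2) \<le> (1 - \<beta> / 2) * h j"
  proof -
    have "dt \<le> (1 - \<beta> / 2) * h j / ((l0 + l1) / 2)" using cfl1 l0_def l1_def by blast
    moreover have "(l0 + l1) / 2 > 0" using l0p l1p by simp
    ultimately show ?thesis by (simp only: pos_le_divide_eq)
  qed
  have c2: "dt * \<bar>w j - w (j - 1)\<bar> \<le> \<beta> * h j"
  proof (cases "w j = w (j - 1)")
    case True then show ?thesis using beta hj by simp
  next
    case False then show ?thesis using cfl2[rule_format, OF False] by (simp add: pos_le_divide_eq)
  qed
  have c2': "dt * (w j - w (j - 1)) \<ge> - (\<beta> * h j)" "dt * (w j - w (j - 1)) \<le> \<beta> * h j"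
  proof -
    have "\<bar>dt * (w j - w (j - 1))\<bar> \<le> \<beta> * h j" using c2 dt_pos by (simp add: abs_mult)
    thus "dt * (w j - w (j - 1)) \<ge> - (\<beta> * h j)" "dt * (w j - w (j - 1)) \<le> \<beta> * h j"
      by (simp_all add: abs_le_iff)
  qed
  have apos: "a \<ge> 0" unfolding a_def using c1 c2' by (simp add: algebra_simps)
  have Hpos: "H > 0" unfolding H_def new_length_def using c2' beta hj
  proof -
    have "\<beta> * h j < h j" using beta hj by simp
    thus "h j + dt * (w j - w (j - 1)) > 0" using c2'(1) by linarith
  qed
  define V1 where "V1 = l1 *\<^sub>R U (j+1) - 1 *\<^sub>R ale_flux \<gamma> (U (j+1)) (w j)"
  define V0 where "V0 = l0 *\<^sub>R U (j-1) - (-1) *\<^sub>R ale_flux \<gamma> (U (j-1)) (w (j-1))"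
  have aV1: "adm V1" unfolding V1_def by (rule key[OF gamma]) (use rho_pos p_pos l1ge in auto)
  have aV0: "adm V0" unfolding V0_def by (rule key[OF gamma]) (use rho_pos p_pos l0ge in auto)
  have aU: "adm (U j)" using adm_iff[OF gamma] rho_pos p_pos by blast
  have eq: "h j *\<^sub>R U j - dt *\<^sub>R (face_flux \<gamma> U w j - face_flux \<gamma> U w (j - 1))
      = a *\<^sub>R U j + ((dt/2) *\<^sub>R V1 + (dt/2) *\<^sub>R V0)"
    unfolding face_flux_def rusanov_flux_def a_def V1_def V0_def
    using ident[of "ale_flux \<gamma> (U j) (w j)" "euler_flux \<gamma> (U j)" "w j" "U j"
        "ale_flux \<gamma> (U j) (w (j-1))" "w (j-1)" "h j" dt "ale_flux \<gamma> (U (j+1)) (w j)" l1 "U (j+1)"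
        "ale_flux \<gamma> (U (j-1)) (w (j-1))" l0 "U (j-1)"]
    by (simp add: ale_flux_def l0_def l1_def face_speed_def add.assoc)
  have "adm (a *\<^sub>R U j + ((dt/2) *\<^sub>R V1 + (dt/2) *\<^sub>R V0))"
    using adm_comb[OF aU apos] adm_add adm_scale aV1 aV0 dt_pos by simp
  hence "adm (new_state \<gamma> h U w dt j)"
    unfolding new_state_def eq H_def[symmetric] using Hpos by (intro adm_scale) auto
  thus "new_length h w dt j > 0
           \<and> density (new_state \<gamma> h U w dt j) > 0
           \<and> pressure \<gamma> (new_state \<gamma> h U w dt j) > 0"
    using adm_iff[OF gamma] Hpos H_def by blast
qed
end
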